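(* Let $G=(V,E)$ be an undirected graph with $n=|V|$, fix an orientation of its edges, and let $P\subseteq\mathbb{R}^E$ be the matching polytope of $G$. Then $P=\operatorname{conv}\{x\in\mathbb{R}^E_{\geq0}: x(\delta(v))\leq1\text{ and }x(\delta^+(v))\in\mathbb{Z}\text{ for every }v\in V\}$. In particular, $P$ admits a MILEF of size $O(n^2)$ with $n$ integer variables.
   Context: For $v\in V$, $\delta(v)$ is the set of edges incident to $v$, and $\delta^+(v)$ (resp. $\delta^-(v)$) the set of edges entering (resp. leaving) $v$ under the fixed orientation. For $F\subseteq E$, $x(F)=\sum_{e\in F}x_e$. The matching polytope is the convex hull of characteristic vectors of matchings (edge sets in which every vertex has degree at most one). A MILEF of a convex set $P\subseteq\mathbb{R}^d$ is a triple $(Q,\sigma,\pi)$ with $Q\subseteq\mathbb{R}^\ell$ a polyhedron, $\sigma:\mathbb{R}^\ell\to\mathbb{R}^k$, $\pi:\mathbb{R}^\ell\to\mathbb{R}^d$ affine, and $P=\operatorname{conv}(\pi(Q\cap\sigma^{-1}(\mathbb{Z}^k)))$; its size is the number of facets of $Q$ and $k$ is its number of integer variables. *)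

theory Defs
  imports "HOL-Analysis.Analysis" "HOL-Library.Function_Algebras"
begin

(* Pointwise real vector space structure on functions, so that R^E and R^l can be
   modelled as functions (with support in E, resp. {..<l}) and the library's
   convex hull / face_of apply. *)
instantiation "fun" :: (type, real_vector) real_vector
begin
definition scaleR_fun :: "real \<Rightarrow> ('a \<Rightarrow> 'b) \<Rightarrow> 'a \<Rightarrow> 'b"
  where "scaleR_fun c f = (\<lambda>x. c *\<^sub>R f x)"
instance
  by standard (simp_all add: scaleR_fun_def fun_eq_iff scaleR_add_right scaleR_add_left)
end

(* A finite undirected simple graph on vertex set V together with a fixed orientation:
   each undirected edge {u,v} is stored exactly once, as the ordered pair (tail, head). *)
definition oriented_simple_graph :: "'a set \<Rightarrow> ('a \<times> 'a) set \<Rightarrow> bool" where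
  "oriented_simple_graph V E \<longleftrightarrow> finite V \<and> E \<subseteq> V \<times> V \<and>
     (\<forall>u v. (u, v) \<in> E \<longrightarrow> u \<noteq> v \<and> (v, u) \<notin> E)"

definition delta :: "('a \<times> 'a) set \<Rightarrow> 'a \<Rightarrow> ('a \<times> 'a) set" where
  "delta E v = {e \<in> E. fst e = v \<or> snd e = v}"

(* delta^+(v): edges entering v *)
definition delta_in :: "('a \<times> 'a) set \<Rightarrow> 'a \<Rightarrow> ('a \<times> 'a) set" where
  "delta_in E v = {e \<in> E. snd e = v}"

definition delta_out :: "('a \<times> 'a) set \<Rightarrow> 'a \<Rightarrow> ('a \<times> 'a) set" where
  "delta_out E v = {e \<in> E. fst e = v}"

definition is_matching :: "('a \<times> 'a) set \<Rightarrow> ('a \<times> 'a) set \<Rightarrow> bool" where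
  "is_matching E M \<longleftrightarrow> M \<subseteq> E \<and> (\<forall>v. card (delta M v) \<le> 1)"

definition matching_polytope :: "('a \<times> 'a) set \<Rightarrow> (('a \<times> 'a) \<Rightarrow> real) set" where
  "matching_polytope E = convex hull {indicator M | M. is_matching E M}"

definition matching_relaxation_int ::
  "'a set \<Rightarrow> ('a \<times> 'a) set \<Rightarrow> (('a \<times> 'a) \<Rightarrow> real) set" where
  "matching_relaxation_int V E =
     {x. (\<forall>e. e \<notin> E \<longrightarrow> x e = 0) \<and> (\<forall>e\<in>E. 0 \<le> x e) \<and>
         (\<forall>v\<in>V. sum x (delta E v) \<le> 1 \<and> sum x (delta_in E v) \<in> \<int>)}"

definition Rsp :: "nat \<Rightarrow> (nat \<Rightarrow> real) set" where
  "Rsp l = {y. \<forall>j\<ge>l. y j = 0}"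

definition polyhedron_in :: "nat \<Rightarrow> (nat \<Rightarrow> real) set \<Rightarrow> bool" where
  "polyhedron_in l Q \<longleftrightarrow>
     (\<exists>(m::nat) (A::nat\<Rightarrow>nat\<Rightarrow>real) (b::nat\<Rightarrow>real). Q = {y \<in> Rsp l. \<forall>i<m. (\<Sum>j<l. A i j * y j) \<le> b i})"

definition is_facet :: "(nat \<Rightarrow> real) set \<Rightarrow> (nat \<Rightarrow> real) set \<Rightarrow> bool" where
  "is_facet F Q \<longleftrightarrow> F face_of Q \<and> F \<noteq> {} \<and> F \<noteq> Q \<and>
     (\<forall>G. G face_of Q \<and> F \<subseteq> G \<and> G \<noteq> Q \<longrightarrow> G = F)"

definition num_facets :: "(nat \<Rightarrow> real) set \<Rightarrow> nat" where
  "num_facets Q = card {F. is_facet F Q}"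

definition affine_to_Rk :: "nat \<Rightarrow> nat \<Rightarrow> ((nat \<Rightarrow> real) \<Rightarrow> (nat \<Rightarrow> real)) \<Rightarrow> bool" where
  "affine_to_Rk l k \<sigma> \<longleftrightarrow> (\<exists>S s0. \<forall>y\<in>Rsp l.
     \<sigma> y = (\<lambda>i. if i < k then (\<Sum>j<l. S i j * y j) + s0 i else 0))"

definition affine_to_RE :: "nat \<Rightarrow> ('b set) \<Rightarrow> ((nat \<Rightarrow> real) \<Rightarrow> ('b \<Rightarrow> real)) \<Rightarrow> bool" where
  "affine_to_RE l E \<pi> \<longleftrightarrow> (\<exists>Pm p0. \<forall>y\<in>Rsp l.
     \<pi> y = (\<lambda>e. if e \<in> E then (\<Sum>j<l. Pm e j * y j) + p0 e else 0))"

definition is_MILEF ::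
  "'b set \<Rightarrow> ('b \<Rightarrow> real) set \<Rightarrow> nat \<Rightarrow> (nat \<Rightarrow> real) set \<Rightarrow> nat \<Rightarrow>
   ((nat \<Rightarrow> real) \<Rightarrow> (nat \<Rightarrow> real)) \<Rightarrow> ((nat \<Rightarrow> real) \<Rightarrow> ('b \<Rightarrow> real)) \<Rightarrow> bool" where
  "is_MILEF E P l Q k \<sigma> \<pi> \<longleftrightarrow> polyhedron_in l Q \<and> affine_to_Rk l k \<sigma> \<and> affine_to_RE l E \<pi> \<and>
     P = convex hull (\<pi> ` {y \<in> Q. \<forall>i<k. \<sigma> y i \<in> \<int>})"

end

theory Submission
  imports Defs
begin


lemma underdetermined:
  fixes W :: "'w set"
  assumes "finite W"
  shows "\<And>(F::'e set) (a::'w \<Rightarrow> 'e \<Rightarrow> real). finite F \<Longrightarrow> card W < card F \<Longrightarrow>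
    \<exists>d. (\<forall>e. e \<notin> F \<longrightarrow> d e = 0) \<and> (\<exists>e\<in>F. d e \<noteq> 0) \<and>
        (\<forall>w\<in>W. (\<Sum>e\<in>F. a w e * d e) = 0)"
  using assms
proof (induction W rule: finite_induct)
  case empty
  then obtain e0 where "e0 \<in> F" by (metis card.empty card_gt_0_iff ex_in_conv)
  define d :: "'e \<Rightarrow> real" where "d = (\<lambda>e. if e = e0 then 1 else 0)"
  have "(\<forall>e. e \<notin> F \<longrightarrow> d e = 0) \<and> (\<exists>e\<in>F. d e \<noteq> 0)"
    using \<open>e0 \<in> F\<close> unfolding d_def by auto
  then show ?case by (intro exI[of _ d]) simp
next
  case (insert w W0)
  show ?case
  proof (cases "\<forall>e\<in>F. a w e = 0")
    case True
    have "card W0 < card F" using insert.prems(2) insert.hyps by simp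
    from insert.IH[OF insert.prems(1) this, of a]
    obtain d where d: "\<forall>e. e \<notin> F \<longrightarrow> d e = 0" "\<exists>e\<in>F. d e \<noteq> 0"
      "\<forall>w\<in>W0. (\<Sum>e\<in>F. a w e * d e) = 0" by blast
    then show ?thesis using True by (intro exI[of _ d]) simp
  next
    case False
    then obtain e0 where e0: "e0 \<in> F" "a w e0 \<noteq> 0" by blast
    define c where "c = a w e0"
    define F0 where "F0 = F - {e0}"
    define a' where "a' = (\<lambda>w' e. a w' e - a w' e0 * a w e / c)"
    have fF0: "finite F0" using insert.prems F0_def by simp
    have cF0: "card W0 < card F0" using insert.prems insert.hyps e0 F0_def by simp
    from insert.IH[OF fF0 cF0, of a']
    obtain d0 where d0: "\<forall>e. e \<notin> F0 \<longrightarrow> d0 e = 0" "\<exists>e\<in>F0. d0 e \<noteq> 0"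
      "\<forall>w\<in>W0. (\<Sum>e\<in>F0. a' w e * d0 e) = 0" by blast
    define S where "S = (\<Sum>e\<in>F0. a w e * d0 e)"
    define d where "d = d0(e0 := - S / c)"
    have split: "\<And>g. (\<Sum>e\<in>F. g e) = g e0 + (\<Sum>e\<in>F0. g e)"
      using e0 insert.prems(1) F0_def by (simp add: sum.remove)
    have dF0: "\<And>e. e \<in> F0 \<Longrightarrow> d e = d0 e" using F0_def d_def by auto
    have c0: "c \<noteq> 0" using e0 c_def by simp
    have "\<forall>e. e \<notin> F \<longrightarrow> d e = 0" using d0(1) e0 F0_def d_def by auto
    moreover have "\<exists>e\<in>F. d e \<noteq> 0" using d0(2) dF0 F0_def by auto
    moreover have "(\<Sum>e\<in>F. a w e * d e) = 0"
    proof -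
      have "(\<Sum>e\<in>F. a w e * d e) = a w e0 * d e0 + (\<Sum>e\<in>F0. a w e * d0 e)"
        using split[of "\<lambda>e. a _ e * d e"] dF0 sum.cong[OF refl, of F0 "\<lambda>e. a _ e * d e" "\<lambda>e. a _ e * d0 e"] by simp
      also have "\<dots> = 0" using c0 c_def d_def S_def by simp
      finally show ?thesis .
    qed
    moreover have "\<forall>w'\<in>W0. (\<Sum>e\<in>F. a w' e * d e) = 0"
    proof
      fix w' assume w': "w' \<in> W0"
      have "(\<Sum>e\<in>F0. a' w' e * d0 e) = (\<Sum>e\<in>F0. a w' e * d0 e) - a w' e0 / c * S"
        unfolding a'_def S_def by (simp add: algebra_simps sum_subtractf sum_distrib_left)
      hence eq: "(\<Sum>e\<in>F0. a w' e * d0 e) = a w' e0 / c * S" using d0(3) w' by simp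
      have "(\<Sum>e\<in>F. a w' e * d e) = a w' e0 * d e0 + (\<Sum>e\<in>F0. a w' e * d0 e)"
        using split[of "\<lambda>e. a _ e * d e"] dF0 sum.cong[OF refl, of F0 "\<lambda>e. a _ e * d e" "\<lambda>e. a _ e * d0 e"] by simp
      also have "\<dots> = 0" using eq d_def c0 by simp
      finally show "(\<Sum>e\<in>F. a w' e * d e) = 0" .
    qed
    ultimately show ?thesis by (intro exI[of _ d]) simp
  qed
qed


locale bip =
  fixes V :: "'a set" and E :: "('a \<times> 'a) set" and A B :: "'a set"
  assumes finV: "finite V" and EV: "E \<subseteq> V \<times> V" and AB: "A \<inter> B = {}"
    and EAB: "\<forall>e\<in>E. fst e \<in> A \<and> snd e \<in> B"
begin

definition feas :: "(('a \<times> 'a) \<Rightarrow> real) \<Rightarrow> bool" where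
  "feas x \<longleftrightarrow> (\<forall>e. e \<notin> E \<longrightarrow> x e = 0) \<and> (\<forall>e\<in>E. 0 \<le> x e) \<and> (\<forall>v\<in>V. sum x (delta E v) \<le> 1)"
definition frac :: "(('a \<times> 'a) \<Rightarrow> real) \<Rightarrow> ('a \<times> 'a) set" where
  "frac x = {e\<in>E. 0 < x e \<and> x e < 1}"
definition slack :: "(('a \<times> 'a) \<Rightarrow> real) \<Rightarrow> 'a set" where
  "slack x = {v\<in>V. sum x (delta E v) < 1}"
definition mu :: "(('a \<times> 'a) \<Rightarrow> real) \<Rightarrow> nat" where
  "mu x = card (frac x) + card (slack x)"

lemma finE: "finite E"
  using finV EV by (meson finite_SigmaI finite_subset)

lemma finD: "finite (delta E v)"
  using finE unfolding delta_def by simp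

lemma lin: "sum (x + t *\<^sub>R d) D = sum x D + t * sum d D"
  by (simp add: sum.distrib sum_distrib_left scaleR_fun_def)

lemma le1: assumes "feas x" "e \<in> E" shows "x e \<le> 1"
proof -
  have v: "fst e \<in> V" using assms(2) EV by auto
  have e: "e \<in> delta E (fst e)" using assms(2) by (simp add: delta_def)
  have "x e \<le> sum x (delta E (fst e))"
  proof (rule member_le_sum[OF e])
    show "finite (delta E (fst e))" by (rule finD)
    fix y assume "y \<in> delta E (fst e) - {e}"
    then show "0 \<le> x y" using assms(1) by (auto simp: feas_def delta_def)
  qed
  also have "\<dots> \<le> 1" using assms(1) v by (simp add: feas_def)
  finally show ?thesis .
qed

lemma degle: "feas x \<Longrightarrow> v \<in> V \<Longrightarrow> sum x (delta E v) \<le> 1"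
  by (simp add: feas_def)

lemma deglt: "feas x \<Longrightarrow> v \<in> V \<Longrightarrow> sum x (delta E v) \<noteq> 1 \<Longrightarrow> sum x (delta E v) < 1"
  using degle less_eq_real_def by blast

lemma step:
  assumes fx: "feas x" and dz: "\<forall>e. e \<notin> frac x \<longrightarrow> d e = 0"
    and dt: "\<forall>v\<in>V. sum x (delta E v) = 1 \<longrightarrow> sum d (delta E v) = 0" and dn: "d e0 \<noteq> 0"
  shows "\<exists>t>0. feas (x + t *\<^sub>R d) \<and> mu (x + t *\<^sub>R d) < mu x"
proof -
  define C1 where "C1 = (\<lambda>e. x e / (- d e)) ` {e\<in>frac x. d e < 0}"
  define C2 where "C2 = (\<lambda>v. (1 - sum x (delta E v)) / sum d (delta E v)) ` {v\<in>slack x. sum d (delta E v) > 0}"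
  define C where "C = C1 \<union> C2"
  have finfrac: "finite (frac x)" using finE unfolding frac_def by simp
  have finslack: "finite (slack x)" using finV unfolding slack_def by simp
  have finC: "finite C" unfolding C_def C1_def C2_def using finfrac finslack by simp
  have e0f: "e0 \<in> frac x" using dz dn by blast
  have e0E: "e0 \<in> E" using e0f by (simp add: frac_def)
  have neC: "C \<noteq> {}"
  proof (cases "\<exists>e. d e < 0")
    case True
    then obtain e where "d e < 0" by blast
    moreover then have "e \<in> frac x" using dz by (metis less_irrefl)
    ultimately show ?thesis unfolding C_def C1_def by blast
  next
    case False
    hence nn: "\<forall>e. 0 \<le> d e" by (simp add: not_less)
    define v where "v = fst e0"
    have vV: "v \<in> V" using e0E EV v_def by auto
    have ev: "e0 \<in> delta E v" using e0E v_def by (simp add: delta_def)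
    have "d e0 \<le> sum d (delta E v)"
      by (rule member_le_sum[OF ev]) (use nn finD in auto)
    hence pos: "sum d (delta E v) > 0" using nn dn by (metis less_eq_real_def order_less_le_trans)
    hence "sum x (delta E v) \<noteq> 1" using dt vV by auto
    hence "sum x (delta E v) < 1" using fx vV by (rule_tac deglt) auto
    hence "v \<in> slack x" using vV by (simp add: slack_def)
    thus ?thesis unfolding C_def C2_def using pos by blast
  qed
  have posC: "\<forall>c\<in>C. c > 0"
  proof
    fix c assume "c \<in> C"
    then consider (a) e where "e \<in> frac x" "d e < 0" "c = x e / (- d e)"
      | (b) v where "v \<in> slack x" "sum d (delta E v) > 0" "c = (1 - sum x (delta E v)) / sum d (delta E v)"
      unfolding C_def C1_def C2_def by blast
    then show "c > 0"
    proof cases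
      case a then show ?thesis by (simp add: frac_def divide_pos_neg)
    next
      case b then show ?thesis by (simp add: slack_def)
    qed
  qed
  define t where "t = Min C"
  have tC: "t \<in> C" using finC neC t_def Min_in by blast
  have tpos: "t > 0" using tC posC by blast
  have tle: "\<And>c. c \<in> C \<Longrightarrow> t \<le> c" using finC t_def by simp
  define y where "y = x + t *\<^sub>R d"
  have yv: "\<And>e. y e = x e + t * d e" by (simp add: y_def scaleR_fun_def)
  have ys: "\<And>D. sum y D = sum x D + t * sum d D" unfolding y_def by (rule lin)
  have fy: "feas y"
    unfolding feas_def
  proof (intro conjI allI ballI impI)
    fix e assume nE: "e \<notin> E"
    hence "e \<notin> frac x" by (simp add: frac_def)
    hence "d e = 0" using dz by blast
    moreover have "x e = 0" using fx nE unfolding feas_def by blast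
    ultimately show "y e = 0" using yv by simp
  next
    fix e assume eE: "e \<in> E"
    show "0 \<le> y e"
    proof (cases "d e < 0")
      case True
      hence ef: "e \<in> frac x" using dz by (metis less_irrefl)
      hence "t \<le> x e / (- d e)" using True tle unfolding C_def C1_def by blast
      hence "t * (- d e) \<le> x e / (- d e) * (- d e)" using True by (intro mult_right_mono) auto
      hence "t * (- d e) \<le> x e" using True by simp
      thus ?thesis using yv by simp
    next
      case False
      thus ?thesis using fx eE tpos yv by (simp add: feas_def)
    qed
  next
    fix v assume vV: "v \<in> V"
    show "sum y (delta E v) \<le> 1"
    proof (cases "sum x (delta E v) = 1")
      case True thus ?thesis using dt vV ys by simp
    next
      case False
      hence lt: "sum x (delta E v) < 1" using fx vV by (rule_tac deglt) auto
      hence vs: "v \<in> slack x" using vV by (simp add: slack_def)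
      show ?thesis
      proof (cases "sum d (delta E v) > 0")
        case True
        hence "t \<le> (1 - sum x (delta E v)) / sum d (delta E v)"
          using vs tle unfolding C_def C2_def by blast
        hence "t * sum d (delta E v) \<le> 1 - sum x (delta E v)" using True by (simp add: le_divide_eq)
        thus ?thesis using ys by simp
      next
        case False
        hence "t * sum d (delta E v) \<le> 0" using tpos by (simp add: mult_nonneg_nonpos)
        thus ?thesis using ys lt by simp
      qed
    qed
  qed
  have fsub: "frac y \<subseteq> frac x"
  proof
    fix e assume ey: "e \<in> frac y"
    show "e \<in> frac x"
    proof (rule ccontr)
      assume "e \<notin> frac x"
      hence "d e = 0" using dz by blast
      hence "y e = x e" using yv by simp
      thus False using ey \<open>e \<notin> frac x\<close> unfolding frac_def by simp
    qed
  qed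
  have ssub: "slack y \<subseteq> slack x"
  proof
    fix v assume vy: "v \<in> slack y"
    show "v \<in> slack x"
    proof (rule ccontr)
      assume "v \<notin> slack x"
      hence "sum x (delta E v) = 1" using vy fx by (auto simp: slack_def feas_def)
      thus False using vy dt ys by (auto simp: slack_def)
    qed
  qed
  have finfy: "finite (frac y)" using finE unfolding frac_def by simp
  have finsy: "finite (slack y)" using finV unfolding slack_def by simp
  have "mu y < mu x"
  proof -
    from tC consider (a) e where "e \<in> frac x" "d e < 0" "t = x e / (- d e)"
      | (b) v where "v \<in> slack x" "sum d (delta E v) > 0" "t = (1 - sum x (delta E v)) / sum d (delta E v)"
      unfolding C_def C1_def C2_def by blast
    then show ?thesis
    proof cases
      case a
      hence "y e = 0" using yv by simp
      hence "e \<notin> frac y" by (simp add: frac_def)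
      hence "frac y \<subset> frac x" using fsub a(1) by blast
      hence "card (frac y) < card (frac x)" using finfrac by (simp add: psubset_card_mono)
      moreover have "card (slack y) \<le> card (slack x)" using ssub finslack by (simp add: card_mono)
      ultimately show ?thesis by (simp add: mu_def)
    next
      case b
      hence "sum y (delta E v) = 1" using ys by simp
      hence "v \<notin> slack y" by (simp add: slack_def)
      hence "slack y \<subset> slack x" using ssub b(1) by blast
      hence "card (slack y) < card (slack x)" using finslack by (simp add: psubset_card_mono)
      moreover have "card (frac y) \<le> card (frac x)" using fsub finfrac by (simp add: card_mono)
      ultimately show ?thesis by (simp add: mu_def)
    qed
  qed
  thus ?thesis using fy tpos y_def by blast
qed


lemma handshake:
  assumes FE: "F \<subseteq> E"
  shows "(\<Sum>v\<in>V. card (delta F v)) = 2 * card F"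
proof -
  have finF: "finite F" using FE finE finite_subset by blast
  have c: "card (delta F v) = (\<Sum>e\<in>F. (if fst e = v then 1 else 0) + (if snd e = v then 1 else 0))" for v
  proof -
    have "card (delta F v) = (\<Sum>e\<in>{e\<in>F. fst e = v \<or> snd e = v}. 1)"
      unfolding delta_def by (rule card_eq_sum)
    also have "\<dots> = (\<Sum>e\<in>F. if fst e = v \<or> snd e = v then 1 else 0)"
      by (rule sum.inter_filter[OF finF])
    also have "\<dots> = (\<Sum>e\<in>F. (if fst e = v then 1 else 0) + (if snd e = v then 1 else 0))"
    proof (rule sum.cong[OF refl])
      fix e assume "e \<in> F"
      hence "e \<in> E" using FE by blast
      hence "fst e \<in> A" "snd e \<in> B" using EAB by auto
      hence "fst e \<noteq> snd e" using AB by auto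
      thus "(if fst e = v \<or> snd e = v then 1 else 0) = (if fst e = v then 1 else 0) + (if snd e = v then (1::nat) else 0)"
        by auto
    qed
    finally show ?thesis .
  qed
  have "(\<Sum>v\<in>V. card (delta F v)) = (\<Sum>v\<in>V. \<Sum>e\<in>F. (if fst e = v then 1 else 0) + (if snd e = v then 1 else 0))"
    using c by simp
  also have "\<dots> = (\<Sum>e\<in>F. \<Sum>v\<in>V. (if fst e = v then 1 else 0) + (if snd e = v then 1 else 0))"
    by (rule sum.swap)
  also have "\<dots> = (\<Sum>e\<in>F. 2)"
  proof (rule sum.cong[OF refl])
    fix e assume "e \<in> F"
    hence "fst e \<in> V" "snd e \<in> V" using FE EV by auto
    thus "(\<Sum>v\<in>V. (if fst e = v then 1 else 0) + (if snd e = v then 1 else 0)) = (2::nat)"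
      using finV by (simp add: sum.distrib)
  qed
  finally show ?thesis by simp
qed

lemma exists_d:
  assumes fx: "feas x" and ne: "frac x \<noteq> {}"
  shows "\<exists>d::('a \<times> 'a) \<Rightarrow> real. (\<forall>e. e \<notin> frac x \<longrightarrow> d e = 0) \<and> (\<exists>e. d e \<noteq> 0) \<and>
             (\<forall>v\<in>V. sum x (delta E v) = 1 \<longrightarrow> sum d (delta E v) = 0)"
proof -
  define F where "F = frac x"
  have FE: "F \<subseteq> E" unfolding F_def frac_def by auto
  have finF: "finite F" using FE finE finite_subset by blast
  define W where "W = {v\<in>V. sum x (delta E v) = 1 \<and> delta F v \<noteq> {}}"
  have finW: "finite W" using finV W_def by simp
  define a where "a = (\<lambda>v e. if e \<in> delta E v then (1::real) else 0)"
  have conv: "sum d (delta E v) = (\<Sum>e\<in>F. a v e * d e)" if dz: "\<forall>e. e \<notin> F \<longrightarrow> d e = 0" for d v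
  proof -
    have "sum d (delta E v) = sum d (F \<inter> delta E v)"
      by (rule sum.mono_neutral_right) (use finD dz in auto)
    also have "\<dots> = (\<Sum>e\<in>F. if e \<in> delta E v then d e else 0)"
      using finF by (simp add: sum.inter_restrict)
    also have "\<dots> = (\<Sum>e\<in>F. a v e * d e)" unfolding a_def by (rule sum.cong) auto
    finally show ?thesis .
  qed
  have deg2: "2 \<le> card (delta F v)" if vW: "v \<in> W" for v
  proof (rule ccontr)
    assume "\<not> 2 \<le> card (delta F v)"
    moreover have "delta F v \<noteq> {}" using vW W_def by simp
    moreover have "finite (delta F v)" using finF by (simp add: delta_def)
    ultimately have "card (delta F v) = 1" using card_gt_0_iff[of "delta F v"] by linarith
    then obtain e0 where e0: "delta F v = {e0}" using card_1_singletonE by blast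
    have e0F: "e0 \<in> F" and e0D: "e0 \<in> delta E v" using e0 FE by (auto simp: delta_def)
    have vV: "v \<in> V" and tight: "sum x (delta E v) = 1" using vW W_def by auto
    have other: "x e \<in> \<int>" if "e \<in> delta E v - {e0}" for e
    proof -
      have eE: "e \<in> E" using that by (simp add: delta_def)
      have "e \<notin> F" using that e0 by (auto simp: delta_def)
      hence "\<not> (0 < x e \<and> x e < 1)" using eE F_def frac_def by auto
      moreover have "0 \<le> x e" "x e \<le> 1" using fx eE le1 by (auto simp: feas_def)
      ultimately have "x e = 0 \<or> x e = 1" by linarith
      thus ?thesis by auto
    qed
    have "sum x (delta E v) = x e0 + sum x (delta E v - {e0})"
      using finD e0D by (simp add: sum.remove)
    moreover have "sum x (delta E v - {e0}) \<in> \<int>" using other by (rule Ints_sum)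
    then obtain N where N: "sum x (delta E v - {e0}) = real_of_int N" by (auto elim: Ints_cases)
    ultimately have "x e0 = 1 - real_of_int N" using tight by simp
    moreover have "0 < x e0" "x e0 < 1" using e0F F_def frac_def by auto
    ultimately have "0 < real_of_int N" "real_of_int N < 1" by linarith+
    hence "0 < N" "N < 1" by simp_all
    thus False by linarith
  qed
  have good: "\<forall>v\<in>V. sum x (delta E v) = 1 \<longrightarrow> sum d (delta E v) = 0"
    if dz: "\<forall>e. e \<notin> F \<longrightarrow> d e = 0" and dW: "\<forall>v\<in>W. (\<Sum>e\<in>F. a v e * d e) = 0" for d
  proof (intro ballI impI)
    fix v assume vV: "v \<in> V" and t: "sum x (delta E v) = 1"
    show "sum d (delta E v) = 0"
    proof (cases "v \<in> W")
      case True thus ?thesis using dW conv[OF dz] by simp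
    next
      case False
      hence emp: "delta F v = {}" using vV t W_def by simp
      have "(\<Sum>e\<in>F. a v e * d e) = 0"
      proof (rule sum.neutral, rule ballI)
        fix e assume eF: "e \<in> F"
        have "e \<in> delta E v \<Longrightarrow> e \<in> delta F v" using eF unfolding delta_def by simp
        hence "e \<notin> delta E v" using emp by blast
        thus "a v e * d e = 0" by (simp add: a_def)
      qed
      thus ?thesis using conv[OF dz] by simp
    qed
  qed
  have sumW2: "2 * card W \<le> (\<Sum>v\<in>W. card (delta F v))"
  proof -
    have "(\<Sum>v\<in>W. (2::nat)) \<le> (\<Sum>v\<in>W. card (delta F v))" by (rule sum_mono) (rule deg2)
    thus ?thesis by simp
  qed
  have hs: "(\<Sum>v\<in>V. card (delta F v)) = 2 * card F" by (rule handshake[OF FE])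
  have WV: "W \<subseteq> V" using W_def by auto
  show ?thesis
  proof (cases "\<exists>u\<in>V. delta F u \<noteq> {} \<and> sum x (delta E u) \<noteq> 1")
    case True
    then obtain u where u: "u \<in> V" "delta F u \<noteq> {}" "sum x (delta E u) \<noteq> 1" by blast
    have uW: "W \<subseteq> V - {u}" using WV u W_def by auto
    have "(\<Sum>v\<in>W. card (delta F v)) \<le> (\<Sum>v\<in>V - {u}. card (delta F v))"
      by (rule sum_mono2) (use finV uW in auto)
    moreover have "(\<Sum>v\<in>V. card (delta F v)) = card (delta F u) + (\<Sum>v\<in>V - {u}. card (delta F v))"
      using finV u(1) by (simp add: sum.remove)
    moreover have "card (delta F u) > 0" using u(2) finF by (simp add: delta_def card_gt_0_iff)
    ultimately have "card W < card F" using sumW2 hs by linarith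
    from underdetermined[OF finW finF this, of a]
    obtain d where d: "\<forall>e. e \<notin> F \<longrightarrow> d e = 0" "\<exists>e\<in>F. d e \<noteq> 0" "\<forall>v\<in>W. (\<Sum>e\<in>F. a v e * d e) = 0"
      by blast
    have g: "\<forall>v\<in>V. sum x (delta E v) = 1 \<longrightarrow> sum d (delta E v) = 0" by (rule good[OF d(1) d(3)])
    have h1: "\<forall>e. e \<notin> frac x \<longrightarrow> d e = 0" using d(1) unfolding F_def by auto
    have h2: "\<exists>e. d e \<noteq> 0" using d(2) by auto
    show ?thesis by (rule exI[of _ d]) (intro conjI h1 h2 g)
  next
    case False
    hence Weq: "W = {v\<in>V. delta F v \<noteq> {}}" unfolding W_def by blast
    have "(\<Sum>v\<in>W. card (delta F v)) = (\<Sum>v\<in>V. card (delta F v))"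
    proof (rule sum.mono_neutral_left[OF finV WV], rule ballI)
      fix v assume "v \<in> V - W"
      hence "delta F v = {}" using Weq by blast
      thus "card (delta F v) = 0" by simp
    qed
    hence cWF: "card W \<le> card F" using sumW2 hs by linarith
    obtain e0 where e0: "e0 \<in> F" using ne F_def by blast
    define w0 where "w0 = snd e0"
    have "e0 \<in> delta F w0" using e0 w0_def by (simp add: delta_def)
    moreover have "w0 \<in> V" using e0 FE EV w0_def by auto
    ultimately have w0W: "w0 \<in> W" using Weq by blast
    have "e0 \<in> E" using e0 FE by blast
    hence w0B: "w0 \<in> B" using EAB w0_def by blast
    have finW': "finite (W - {w0})" using finW by simp
    have cW0: "card W > 0" using w0W finW card_gt_0_iff by blast
    have cW1: "card (W - {w0}) = card W - 1" using finW w0W by (simp add: card_Diff_singleton)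
    have "card (W - {w0}) < card F" using cWF cW0 cW1 by linarith
    from underdetermined[OF finW' finF this, of a]
    obtain d where d: "\<forall>e. e \<notin> F \<longrightarrow> d e = 0" "\<exists>e\<in>F. d e \<noteq> 0" "\<forall>v\<in>W - {w0}. (\<Sum>e\<in>F. a v e * d e) = 0"
      by blast
    define g where "g = (\<lambda>v. (\<Sum>e\<in>F. a v e * d e))"
    have swapS: "(\<Sum>v\<in>W \<inter> S. g v) = (\<Sum>e\<in>F. d e)"
      if endp: "\<And>e. e \<in> F \<Longrightarrow> {v\<in>W \<inter> S. e \<in> delta E v} = {h e}" for S h
    proof -
      have "(\<Sum>v\<in>W \<inter> S. g v) = (\<Sum>e\<in>F. \<Sum>v\<in>W \<inter> S. a v e * d e)"
        unfolding g_def by (rule sum.swap)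
      also have "\<dots> = (\<Sum>e\<in>F. d e)"
      proof (rule sum.cong[OF refl])
        fix e assume eF: "e \<in> F"
        have "(\<Sum>v\<in>W \<inter> S. a v e * d e) = (\<Sum>v\<in>{v\<in>W \<inter> S. e \<in> delta E v}. d e)"
        proof -
          have "(\<Sum>v\<in>W \<inter> S. a v e * d e) = (\<Sum>v\<in>W \<inter> S. if e \<in> delta E v then d e else 0)"
            unfolding a_def by (rule sum.cong) auto
          also have "\<dots> = (\<Sum>v\<in>{v\<in>W \<inter> S. e \<in> delta E v}. d e)"
            using finW by (intro sum.inter_filter[symmetric]) simp
          finally show ?thesis .
        qed
        also have "\<dots> = d e" using endp[OF eF] by simp
        finally show "(\<Sum>v\<in>W \<inter> S. a v e * d e) = d e" .
      qed
      finally show ?thesis .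
    qed
    have inW: "fst e \<in> W" "snd e \<in> W" if eF: "e \<in> F" for e
    proof -
      have "e \<in> delta F (fst e)" "e \<in> delta F (snd e)" using eF by (auto simp: delta_def)
      moreover have "fst e \<in> V" "snd e \<in> V" using eF FE EV by auto
      ultimately show "fst e \<in> W" "snd e \<in> W" using Weq by blast+
    qed
    have sA: "(\<Sum>v\<in>W \<inter> A. g v) = (\<Sum>e\<in>F. d e)"
    proof (rule swapS)
      fix e assume eF: "e \<in> F"
      have "fst e \<in> A" "snd e \<in> B" using eF FE EAB by auto
      thus "{v\<in>W \<inter> A. e \<in> delta E v} = {fst e}" using inW[OF eF] eF FE AB
        by (auto simp: delta_def)
    qed
    have sB: "(\<Sum>v\<in>W \<inter> B. g v) = (\<Sum>e\<in>F. d e)"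
    proof (rule swapS)
      fix e assume eF: "e \<in> F"
      have "fst e \<in> A" "snd e \<in> B" using eF FE EAB by auto
      thus "{v\<in>W \<inter> B. e \<in> delta E v} = {snd e}" using inW[OF eF] eF FE AB
        by (auto simp: delta_def)
    qed
    have "(\<Sum>v\<in>W \<inter> A. g v) = 0"
      by (rule sum.neutral) (use d(3) w0B AB g_def in auto)
    moreover have "(\<Sum>v\<in>W \<inter> B. g v) = g w0 + (\<Sum>v\<in>W \<inter> B - {w0}. g v)"
      using finW w0W w0B by (simp add: sum.remove)
    moreover have "(\<Sum>v\<in>W \<inter> B - {w0}. g v) = 0"
      by (rule sum.neutral) (use d(3) g_def in auto)
    ultimately have "g w0 = 0" using sA sB by simp
    hence allW: "\<forall>v\<in>W. (\<Sum>e\<in>F. a v e * d e) = 0" using d(3) g_def by auto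
    have g: "\<forall>v\<in>V. sum x (delta E v) = 1 \<longrightarrow> sum d (delta E v) = 0" by (rule good[OF d(1) allW])
    have h1: "\<forall>e. e \<notin> frac x \<longrightarrow> d e = 0" using d(1) unfolding F_def by auto
    have h2: "\<exists>e. d e \<noteq> 0" using d(2) by auto
    show ?thesis by (rule exI[of _ d]) (intro conjI h1 h2 g)
  qed
qed


lemma feas_hull:
  "feas x \<Longrightarrow> x \<in> convex hull {indicator M | M. is_matching E M}"
proof (induction "mu x" arbitrary: x rule: less_induct)
  case less
  note fx = less.prems
  show ?case
  proof (cases "frac x = {}")
    case True
    define M where "M = {e\<in>E. x e = 1}"
    have x01: "x e = 0 \<or> x e = 1" if eE: "e \<in> E" for e
    proof -
      have "0 \<le> x e" using fx eE by (simp add: feas_def)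
      moreover have "x e \<le> 1" using le1[OF fx eE] .
      moreover have "e \<notin> frac x" using True by blast
      ultimately show ?thesis using eE unfolding frac_def by auto
    qed
    have xM: "x = indicator M"
    proof
      fix e
      show "x e = indicator M e"
      proof (cases "e \<in> E")
        case True thus ?thesis using x01[OF True] M_def by (auto simp: indicator_def)
      next
        case False
        hence "x e = 0" using fx unfolding feas_def by blast
        thus ?thesis using False M_def by (simp add: indicator_def)
      qed
    qed
    have ME: "M \<subseteq> E" using M_def by auto
    have "is_matching E M"
      unfolding is_matching_def
    proof (intro conjI ME allI)
      fix v
      show "card (delta M v) \<le> 1"
      proof (cases "v \<in> V")
        case True
        have "sum x (delta E v) = real (card (delta E v \<inter> M))"
        proof -
          have "sum (indicator M) (delta E v) = (\<Sum>e\<in>delta E v. if e \<in> M then (1::real) else 0)"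
            by (rule sum.cong) (auto simp: indicator_def)
          also have "\<dots> = (\<Sum>e\<in>delta E v \<inter> M. (1::real))"
            by (rule sum.inter_restrict[OF finD, symmetric])
          also have "\<dots> = real (card (delta E v \<inter> M))" by simp
          finally show ?thesis unfolding xM .
        qed
        moreover have "delta E v \<inter> M = delta M v" using ME by (auto simp: delta_def)
        moreover have "sum x (delta E v) \<le> 1" using degle[OF fx True] .
        ultimately have "real (card (delta M v)) \<le> 1" by simp
        thus ?thesis by simp
      next
        case False
        have "delta M v = {}" using False ME EV by (auto simp: delta_def)
        thus ?thesis by simp
      qed
    qed
    hence "x \<in> {indicator M | M. is_matching E M}" using xM by blast
    thus ?thesis by (rule hull_inc)
  next
    case False
    obtain d :: "('a \<times> 'a) \<Rightarrow> real" where d: "\<forall>e. e \<notin> frac x \<longrightarrow> d e = 0" "\<exists>e. d e \<noteq> 0"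
      "\<forall>v\<in>V. sum x (delta E v) = 1 \<longrightarrow> sum d (delta E v) = 0"
      using exists_d[OF fx False] by blast
    obtain e0 where e0: "d e0 \<noteq> 0" using d(2) by blast
    define d' where "d' = (\<lambda>e. - d e)"
    have d'1: "\<forall>e. e \<notin> frac x \<longrightarrow> d' e = 0" using d(1) d'_def by simp
    have d'3: "\<forall>v\<in>V. sum x (delta E v) = 1 \<longrightarrow> sum d' (delta E v) = 0"
      using d(3) d'_def by (simp add: sum_negf)
    have d'0: "d' e0 \<noteq> 0" using e0 d'_def by simp
    obtain t1 where t1: "t1 > 0" "feas (x + t1 *\<^sub>R d)" "mu (x + t1 *\<^sub>R d) < mu x"
      using step[OF fx d(1) d(3) e0] by blast
    obtain t2 where t2: "t2 > 0" "feas (x + t2 *\<^sub>R d')" "mu (x + t2 *\<^sub>R d') < mu x"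
      using step[OF fx d'1 d'3 d'0] by blast
    define y1 where "y1 = x + t1 *\<^sub>R d"
    define y2 where "y2 = x + t2 *\<^sub>R d'"
    have h1: "y1 \<in> convex hull {indicator M | M. is_matching E M}"
      using less.hyps[OF t1(3) t1(2)] y1_def by simp
    have h2: "y2 \<in> convex hull {indicator M | M. is_matching E M}"
      using less.hyps[OF t2(3) t2(2)] y2_def by simp
    define u where "u = t2 / (t1 + t2)"
    define w where "w = t1 / (t1 + t2)"
    have uw: "0 \<le> u" "0 \<le> w" "u + w = 1" using t1(1) t2(1) u_def w_def
      by (auto simp: add_divide_distrib[symmetric])
    have "x = u *\<^sub>R y1 + w *\<^sub>R y2"
    proof
      fix e
      have "(u *\<^sub>R y1 + w *\<^sub>R y2) e = u * (x e + t1 * d e) + w * (x e - t2 * d e)"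
        by (simp add: y1_def y2_def d'_def scaleR_fun_def)
      also have "\<dots> = (u + w) * x e + (u * t1 - w * t2) * d e" by (simp add: algebra_simps)
      also have "u * t1 - w * t2 = 0" using u_def w_def by (simp add: field_simps)
      finally show "x e = (u *\<^sub>R y1 + w *\<^sub>R y2) e" using uw by simp
    qed
    thus ?thesis using convexD[OF convex_convex_hull h1 h2 uw] by simp
  qed
qed

end


lemma sum_nonneg_mono:
  assumes "finite T" "S \<subseteq> T" "\<forall>e\<in>T. 0 \<le> (x e::real)"
  shows "sum x S \<le> sum x T"
  using assms by (intro sum_mono2) auto

lemma int01: assumes "(z::real) \<in> \<int>" "0 < z" "z \<le> 1" shows "z = 1"
proof -
  obtain n where n: "z = real_of_int n" using assms(1) Ints_cases by blast
  hence "0 < n" "n \<le> 1" using assms by simp_all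
  hence "n = 1" by linarith
  thus ?thesis using n by simp
qed

theorem part1:
  fixes V :: "'a set" and E
  assumes G: "oriented_simple_graph V E"
  shows "matching_polytope E = convex hull (matching_relaxation_int V E)"
proof -
  have finV: "finite V" and EV: "E \<subseteq> V \<times> V" and noloop: "\<And>e. e \<in> E \<Longrightarrow> fst e \<noteq> snd e"
    using G unfolding oriented_simple_graph_def by auto
  have finE: "finite E" using finV EV by (meson finite_SigmaI finite_subset)
  have finDE: "finite (delta E v)" "finite (delta_in E v)" for v
    using finE by (simp_all add: delta_def delta_in_def)
  define S where "S = matching_relaxation_int V E"
  have ind_in: "indicator M \<in> S" if M: "is_matching E M" for M
  proof -
    have ME: "M \<subseteq> E" and c: "\<And>v. card (delta M v) \<le> 1" using M by (auto simp: is_matching_def)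
    have finM: "finite M" using ME finE finite_subset by blast
    have sc: "sum (indicator M) D = real (card (D \<inter> M))" if "finite D" for D :: "('a \<times> 'a) set"
    proof -
      have "sum (indicator M) D = (\<Sum>e\<in>D. if e \<in> M then (1::real) else 0)"
        by (rule sum.cong) (auto simp: indicator_def)
      also have "\<dots> = (\<Sum>e\<in>D \<inter> M. (1::real))"
        by (rule sum.inter_restrict[OF that, symmetric])
      also have "\<dots> = real (card (D \<inter> M))" by simp
      finally show ?thesis .
    qed
    have "delta E v \<inter> M = delta M v" for v using ME by (auto simp: delta_def)
    hence d1: "sum (indicator M :: _ \<Rightarrow> real) (delta E v) \<le> 1" for v using sc[OF finDE(1)] c by simp
    have d2: "sum (indicator M :: _ \<Rightarrow> real) (delta_in E v) \<in> \<int>" for v using sc[OF finDE(2)] by simp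
    show ?thesis unfolding S_def matching_relaxation_int_def
      using ME d1 d2 by (auto simp: indicator_def)
  qed
  have sub1: "matching_polytope E \<subseteq> convex hull S"
    unfolding matching_polytope_def by (rule hull_mono) (use ind_in in blast)
  have sub2: "S \<subseteq> matching_polytope E"
  proof
    fix x assume xS: "x \<in> S"
    have x0: "\<And>e. e \<notin> E \<Longrightarrow> x e = 0" and xnn: "\<And>e. e \<in> E \<Longrightarrow> 0 \<le> x e"
      and xd: "\<And>v. v \<in> V \<Longrightarrow> sum x (delta E v) \<le> 1"
      and xi: "\<And>v. v \<in> V \<Longrightarrow> sum x (delta_in E v) \<in> \<int>"
      using xS unfolding S_def matching_relaxation_int_def by auto
    have innn: "0 \<le> sum x (delta_in E v)" for v
      by (rule sum_nonneg) (use xnn in \<open>auto simp: delta_in_def\<close>)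
    have inle: "sum x (delta_in E v) \<le> sum x (delta E v)" for v
      by (rule sum_nonneg_mono[OF finDE(1)]) (use xnn in \<open>auto simp: delta_in_def delta_def\<close>)
    define K where "K = {v\<in>V. sum x (delta_in E v) = 1}"
    define T where "T = V - K"
    define E' where "E' = {e\<in>E. fst e \<in> T \<and> snd e \<in> K}"
    have supp: "x e = 0" if eE: "e \<in> E" and nE': "e \<notin> E'" for e
    proof (rule ccontr)
      assume "x e \<noteq> 0"
      hence pos: "x e > 0" using xnn[OF eE] by simp
      define v where "v = snd e"
      define u where "u = fst e"
      have vV: "v \<in> V" and uV: "u \<in> V" using eE EV v_def u_def by auto
      have evin: "e \<in> delta_in E v" using eE v_def by (simp add: delta_in_def)
      have "x e \<le> sum x (delta_in E v)"
        by (rule member_le_sum[OF evin]) (use xnn finDE in \<open>auto simp: delta_in_def\<close>)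
      hence "sum x (delta_in E v) = 1"
        using int01[OF xi[OF vV]] pos inle[of v] xd[OF vV] by linarith
      hence vK: "v \<in> K" using vV K_def by simp
      have uT: "u \<in> T"
      proof (rule ccontr)
        assume "u \<notin> T"
        hence uK: "sum x (delta_in E u) = 1" using uV T_def K_def by simp
        have nin: "e \<notin> delta_in E u" using noloop[OF eE] u_def by (simp add: delta_in_def)
        have "x e + sum x (delta_in E u) = sum x (insert e (delta_in E u))"
          using nin finDE(2) by simp
        also have "\<dots> \<le> sum x (delta E u)"
          by (rule sum_nonneg_mono[OF finDE(1)]) (use xnn eE u_def in \<open>auto simp: delta_in_def delta_def\<close>)
        finally show False using uK pos xd[OF uV] by linarith
      qed
      have "e \<in> E'" using eE uT vK u_def v_def E'_def by simp
      thus False using nE' by simp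
    qed
    interpret bp: bip V E' T K
      by unfold_locales (use finV EV in \<open>auto simp: T_def E'_def\<close>)
    have finE': "finite E'" using finE E'_def by simp
    have same: "sum x (delta E' v) = sum x (delta E v)" for v
      by (rule sum.mono_neutral_left) (use finDE supp in \<open>auto simp: delta_def E'_def\<close>)
    have "bp.feas x"
      unfolding bp.feas_def
    proof (intro conjI allI ballI impI)
      fix e assume "e \<notin> E'"
      thus "x e = 0" using x0 supp by blast
    next
      fix e assume "e \<in> E'" thus "0 \<le> x e" using xnn E'_def by simp
    next
      fix v assume "v \<in> V" thus "sum x (delta E' v) \<le> 1" using xd same by simp
    qed
    hence "x \<in> convex hull {indicator M | M. is_matching E' M}" by (rule bp.feas_hull)
    moreover have "convex hull {indicator M | M. is_matching E' M} \<subseteq> convex hull {indicator M | M. is_matching E M}"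
      by (rule hull_mono) (auto simp: is_matching_def E'_def)
    ultimately show "x \<in> matching_polytope E" unfolding matching_polytope_def by blast
  qed
  have "convex hull S \<subseteq> matching_polytope E"
    by (rule hull_minimal[OF sub2]) (simp add: matching_polytope_def)
  thus ?thesis using sub1 S_def by blast
qed



lemma facets_le:
  fixes A :: "nat \<Rightarrow> nat \<Rightarrow> real" and b :: "nat \<Rightarrow> real"
  assumes Qdef: "Q = {y \<in> Rsp l. \<forall>i<m. (\<Sum>j<l. A i j * y j) \<le> b i}"
  shows "num_facets Q \<le> m"
proof -
  define f where "f = (\<lambda>i y. (\<Sum>j<l. A i j * y j))"
  have Qf: "Q = {y \<in> Rsp l. \<forall>i<m. f i y \<le> b i}" using Qdef f_def by simp
  define G where "G = (\<lambda>i. {y\<in>Q. f i y = b i})"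
  have flin: "f i (\<lambda>j. u * y j + w * z j) = u * f i y + w * f i z" for i u w y z
    unfolding f_def by (simp add: algebra_simps sum.distrib sum_distrib_left)
  have comb: "u *\<^sub>R y + w *\<^sub>R z = (\<lambda>j. u * y j + w * z j)" for u w and y z :: "nat \<Rightarrow> real"
    by (simp add: scaleR_fun_def plus_fun_def)
  have Rsp_comb: "(\<lambda>j. u * y j + w * z j) \<in> Rsp l" if "y \<in> Rsp l" "z \<in> Rsp l" for u w y z
    using that by (simp add: Rsp_def)
  have convQ: "convex Q"
    proof (rule convexI)
    fix y z :: "nat \<Rightarrow> real" and u w :: real assume yz: "y \<in> Q" "z \<in> Q" and uw0: "0 \<le> u" "0 \<le> w" "u + w = 1"
    note uw = conjI[OF uw0(1) conjI[OF uw0(2) uw0(3)]]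
    have "(\<lambda>j. u * y j + w * z j) \<in> Q"
      unfolding Qf
    proof (intro CollectI conjI allI impI)
      show "(\<lambda>j. u * y j + w * z j) \<in> Rsp l" using yz Qf Rsp_comb by blast
    next
      fix i assume i: "i < m"
      have "u * f i y \<le> u * b i" using yz i Qf uw by (intro mult_left_mono) auto
      moreover have "w * f i z \<le> w * b i" using yz i Qf uw by (intro mult_left_mono) auto
      ultimately have "u * f i y + w * f i z \<le> u * b i + w * b i" by (rule add_mono)
      also have "\<dots> = (u + w) * b i" by (simp add: distrib_right)
      also have "\<dots> = b i" using uw by simp
      finally show "f i (\<lambda>j. u * y j + w * z j) \<le> b i" using flin by simp
    qed
    thus "u *\<^sub>R y + w *\<^sub>R z \<in> Q" using comb by simp
  qed
  have Gface: "G i face_of Q" if i: "i < m" for i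
    unfolding face_of_def
  proof (intro conjI)
    show "G i \<subseteq> Q" using G_def by auto
  next
    show "convex (G i)"
      proof (rule convexI)
      fix y z :: "nat \<Rightarrow> real" and u w :: real assume yz: "y \<in> G i" "z \<in> G i" and uw0: "0 \<le> u" "0 \<le> w" "u + w = 1"
    note uw = conjI[OF uw0(1) conjI[OF uw0(2) uw0(3)]]
      have "u *\<^sub>R y + w *\<^sub>R z \<in> Q" using convQ yz uw G_def unfolding convex_def by blast
      moreover have "f i (u *\<^sub>R y + w *\<^sub>R z) = b i"
      proof -
        have "f i (u *\<^sub>R y + w *\<^sub>R z) = u * f i y + w * f i z" using comb flin by simp
        also have "\<dots> = u * b i + w * b i" using yz G_def by simp
        also have "\<dots> = (u + w) * b i" by (simp add: distrib_right)
        finally show ?thesis using uw by simp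
      qed
      ultimately show "u *\<^sub>R y + w *\<^sub>R z \<in> G i" using G_def by simp
    qed
  next
    show "\<forall>y\<in>Q. \<forall>z\<in>Q. \<forall>x\<in>G i. x \<in> open_segment y z \<longrightarrow> y \<in> G i \<and> z \<in> G i"
    proof (intro ballI impI)
    fix y z x assume yQ: "y \<in> Q" and zQ: "z \<in> Q" and xG: "x \<in> G i" and xs: "x \<in> open_segment y z"
    obtain u where u: "0 < u" "u < 1" "x = (1 - u) *\<^sub>R y + u *\<^sub>R z" using xs in_segment(2) by blast
    have fx: "f i x = (1 - u) * f i y + u * f i z" using u(3) comb flin by simp
    have "f i x = b i" using xG G_def by simp
    moreover have "f i y \<le> b i" "f i z \<le> b i" using yQ zQ Qf i by auto
    ultimately have sum0: "(1 - u) * (b i - f i y) + u * (b i - f i z) = 0" using fx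
      by (simp add: algebra_simps)
    have p1: "0 \<le> (1 - u) * (b i - f i y)" using u \<open>f i y \<le> b i\<close> by simp
    have p2: "0 \<le> u * (b i - f i z)" using u \<open>f i z \<le> b i\<close> by simp
    have "(1 - u) * (b i - f i y) = 0" "u * (b i - f i z) = 0" using sum0 p1 p2 by linarith+
    hence "f i y = b i" "f i z = b i" using u by auto
    thus "y \<in> G i \<and> z \<in> G i" using yQ zQ G_def by simp
    qed
  qed
  have key: "\<exists>i<m. F = G i" if fF: "is_facet F Q" for F
  proof (rule ccontr)
    assume nex: "\<not> (\<exists>i<m. F = G i)"
    have Fface: "F face_of Q" and Fne: "F \<noteq> {}" and FQ: "F \<noteq> Q"
      and Fmax: "\<And>H. H face_of Q \<Longrightarrow> F \<subseteq> H \<Longrightarrow> H \<noteq> Q \<Longrightarrow> H = F"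
      using fF unfolding is_facet_def by auto
    have FsQ: "F \<subseteq> Q" using Fface face_of_imp_subset by blast
    have convF: "convex F" using Fface face_of_imp_convex by blast
    have GQ: "\<And>i. i < m \<Longrightarrow> F \<subseteq> G i \<Longrightarrow> G i = Q"
      using Fmax Gface nex by metis
    define I where "I = {i. i < m \<and> \<not> F \<subseteq> G i}"
    have finI: "finite I" using I_def by simp
    have strict: "\<exists>y\<in>F. f i y < b i" if iI: "i \<in> I" for i
    proof -
      obtain y where y: "y \<in> F" "y \<notin> G i" using iI I_def by blast
      hence "f i y \<le> b i" using FsQ Qf iI I_def by auto
      moreover have "f i y \<noteq> b i" using y FsQ G_def by auto
      ultimately have "f i y < b i" by simp
      thus ?thesis using y(1) by blast
    qed
    have zex: "J \<subseteq> I \<Longrightarrow> \<exists>z\<in>F. \<forall>i\<in>J. f i z < b i" for J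
    proof (induction J rule: infinite_finite_induct)
      case (infinite J) thus ?case using finI finite_subset by blast
    next
      case empty thus ?case using Fne by blast
    next
      case (insert i J)
      then obtain z where z: "z \<in> F" "\<forall>i\<in>J. f i z < b i" by blast
      obtain y where y: "y \<in> F" "f i y < b i" using strict insert.prems by blast
      define z' where "z' = (1/2) *\<^sub>R z + (1/2) *\<^sub>R y"
      have "z' \<in> F" using convexD[OF convF z(1) y(1)] z'_def by simp
      moreover have "\<forall>k\<in>insert i J. f k z' < b k"
      proof
        fix k assume k: "k \<in> insert i J"
        hence km: "k < m" using insert.prems I_def by auto
        have fz': "f k z' = (1/2) * f k z + (1/2) * f k y" unfolding z'_def comb by (rule flin)
        have "f k z \<le> b k" "f k y \<le> b k" using z(1) y(1) FsQ Qf km by auto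
        moreover have "f k z < b k \<or> f k y < b k" using k z(2) y(2) by auto
        ultimately show "f k z' < b k" using fz' by linarith
      qed
      ultimately show ?case by blast
    qed
    obtain z where zF: "z \<in> F" and zs: "\<forall>i\<in>I. f i z < b i" using zex by blast
    have "Q \<subseteq> F"
    proof
      fix q assume qQ: "q \<in> Q"
      show "q \<in> F"
      proof (cases "q = z")
        case True thus ?thesis using zF by simp
      next
        case False
        define C where "C = insert 1 ((\<lambda>i. (b i - f i z) / (\<bar>f i z - f i q\<bar> + 1)) ` I)"
        have finC: "finite C" "C \<noteq> {}" using finI C_def by auto
        have Cpos: "\<forall>c\<in>C. 0 < c" using zs C_def by auto
        define \<epsilon> where "\<epsilon> = Min C"
        have epos: "0 < \<epsilon>" using finC Cpos \<epsilon>_def Min_in by blast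
        have ele: "\<And>c. c \<in> C \<Longrightarrow> \<epsilon> \<le> c" using finC \<epsilon>_def by simp
        define w where "w = (\<lambda>j. (1 + \<epsilon>) * z j + (- \<epsilon>) * q j)"
        have zQ: "z \<in> Q" using zF FsQ by blast
        have fw: "f i w = (1 + \<epsilon>) * f i z + (- \<epsilon>) * f i q" for i unfolding w_def by (rule flin)
        have wQ: "w \<in> Q"
          unfolding Qf
        proof (intro CollectI conjI allI impI)
          show "w \<in> Rsp l" unfolding w_def using zQ qQ Qf Rsp_comb by blast
        next
          fix i assume i: "i < m"
          show "f i w \<le> b i"
          proof (cases "i \<in> I")
            case True
            have "\<epsilon> \<le> (b i - f i z) / (\<bar>f i z - f i q\<bar> + 1)" using ele True C_def by auto
            hence "\<epsilon> * (\<bar>f i z - f i q\<bar> + 1) \<le> b i - f i z" by (simp add: le_divide_eq add_pos_nonneg)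
            moreover have "\<epsilon> * (f i z - f i q) \<le> \<epsilon> * (\<bar>f i z - f i q\<bar> + 1)"
              using epos by (intro mult_left_mono) auto
            moreover have "f i w = f i z + \<epsilon> * (f i z - f i q)" using fw[of i] by (simp add: algebra_simps)
            ultimately show ?thesis by linarith
          next
            case False
            hence "F \<subseteq> G i" using i I_def by auto
            hence "G i = Q" using GQ i by blast
            hence "f i z = b i" "f i q = b i" using zQ qQ G_def by auto
            thus ?thesis using fw[of i] by (simp add: algebra_simps)
          qed
        qed
        define u where "u = \<epsilon> / (1 + \<epsilon>)"
        have u01: "0 < u" "u < 1" using epos u_def by auto
        have zeq: "z = (1 - u) *\<^sub>R w + u *\<^sub>R q"
        proof
          fix j
          have "((1 - u) *\<^sub>R w + u *\<^sub>R q) j = (1 - u) * ((1 + \<epsilon>) * z j - \<epsilon> * q j) + u * q j"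
            by (simp add: w_def scaleR_fun_def)
          also have "\<dots> = ((1 - u) * (1 + \<epsilon>)) * z j - ((1 - u) * \<epsilon>) * q j + u * q j"
            by (simp add: algebra_simps)
          also have "(1 - u) * (1 + \<epsilon>) = 1" using epos unfolding u_def by (simp add: field_simps)
          also have "(1 - u) * \<epsilon> = u" using epos unfolding u_def by (simp add: field_simps)
          also have "1 * z j - u * q j + u * q j = z j" by simp
          finally show "z j = ((1 - u) *\<^sub>R w + u *\<^sub>R q) j" by simp
        qed
        have "w \<noteq> q"
        proof
          assume "w = q"
          hence "z = q" using zeq by (simp add: scaleR_left_diff_distrib algebra_simps)
          thus False using False by simp
        qed
        hence "z \<in> open_segment w q" using zeq u01 in_segment(2) by blast
        thus "q \<in> F" using Fface wQ qQ zF unfolding face_of_def by blast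
      qed
    qed
    thus False using FsQ FQ by blast
  qed
  have "{F. is_facet F Q} \<subseteq> G ` {..<m}" using key by blast
  hence "card {F. is_facet F Q} \<le> card (G ` {..<m})" by (intro card_mono) auto
  also have "\<dots> \<le> m" using card_image_le[of "{..<m}" G] by simp
  finally show ?thesis unfolding num_facets_def .
qed



lemma reindex_sum:
  fixes ge :: "nat \<Rightarrow> 'e" and y :: "nat \<Rightarrow> real"
  assumes bij: "bij_betw ge {..<l} E" and DE: "D \<subseteq> E"
  shows "(\<Sum>j<l. (if ge j \<in> D then 1 else 0) * y j) = (\<Sum>e\<in>D. y (inv_into {..<l} ge e))"
proof -
  let ?ie = "inv_into {..<l} ge"
  have inj: "inj_on ge {..<l}" and img: "ge ` {..<l} = E" using bij by (auto simp: bij_betw_def)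
  have "(\<Sum>j<l. (if ge j \<in> D then 1 else 0) * y j) = (\<Sum>j\<in>{..<l}. if ge j \<in> D then y j else 0)"
    by (rule sum.cong) auto
  also have "\<dots> = (\<Sum>j\<in>{j\<in>{..<l}. ge j \<in> D}. y j)"
    by (rule sum.inter_filter[symmetric]) simp
  also have "{j\<in>{..<l}. ge j \<in> D} = ?ie ` D"
  proof
    show "{j\<in>{..<l}. ge j \<in> D} \<subseteq> ?ie ` D"
    proof
      fix j assume "j \<in> {j\<in>{..<l}. ge j \<in> D}"
      hence "j \<in> {..<l}" "ge j \<in> D" by auto
      hence "?ie (ge j) = j" using inj by simp
      thus "j \<in> ?ie ` D" using \<open>ge j \<in> D\<close> by (metis imageI)
    qed
  next
    show "?ie ` D \<subseteq> {j\<in>{..<l}. ge j \<in> D}"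
    proof
      fix j assume "j \<in> ?ie ` D"
      then obtain e where e: "e \<in> D" "j = ?ie e" by blast
      have eimg: "e \<in> ge ` {..<l}" using e DE img by blast
      have "j \<in> {..<l}" using inv_into_into[OF eimg] e by simp
      moreover have "ge j = e" using f_inv_into_f[OF eimg] e by simp
      ultimately show "j \<in> {j\<in>{..<l}. ge j \<in> D}" using e by simp
    qed
  qed
  also have "(\<Sum>j\<in>?ie ` D. y j) = (\<Sum>e\<in>D. y (?ie e))"
    by (rule sum.reindex_cong[where l = ?ie]) (use DE img inj_on_inv_into in auto)
  finally show ?thesis .
qed

lemma milef_construction:
  fixes V :: "'a set" and E :: "('a \<times> 'a) set"
  assumes finV: "finite V" and EV: "E \<subseteq> V \<times> V"
    and P1: "matching_polytope E = convex hull (matching_relaxation_int V E)"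
  shows "\<exists>l Q \<sigma> \<pi>. is_MILEF E (matching_polytope E) l Q (card V) \<sigma> \<pi> \<and>
                   num_facets Q \<le> 2 * card V ^ 2"
proof -
  define n where "n = card V"
  have finE: "finite E" using finV EV by (meson finite_SigmaI finite_subset)
  define l where "l = card E"
  obtain ge where ge: "bij_betw ge {..<l} E"
    using ex_bij_betw_nat_finite[OF finE] l_def atLeast0LessThan by metis
  obtain gv where gv: "bij_betw gv {..<n} V"
    using ex_bij_betw_nat_finite[OF finV] n_def atLeast0LessThan by metis
  define ie where "ie = inv_into {..<l} ge"
  have ge_img: "ge ` {..<l} = E" and ge_inj: "inj_on ge {..<l}" using ge by (auto simp: bij_betw_def)
  have gv_img: "gv ` {..<n} = V" using gv by (auto simp: bij_betw_def)
  have ie_lt: "ie e < l" if "e \<in> E" for e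
    using inv_into_into[of e ge "{..<l}"] that ge_img ie_def by auto
  have ge_ie: "ge (ie e) = e" if "e \<in> E" for e
    using f_inv_into_f[of e ge "{..<l}"] that ge_img ie_def by auto
  have ie_ge: "ie (ge j) = j" if "j < l" for j
    using ge_inj that ie_def by simp
  have geE: "ge j \<in> E" if "j < l" for j using ge_img that by auto
  define ind where "ind = (\<lambda>D (j::nat). if ge j \<in> D then (1::real) else 0)"
  have rs: "(\<Sum>j<l. ind D j * y j) = (\<Sum>e\<in>D. y (ie e))" if "D \<subseteq> E" for D y
    unfolding ind_def ie_def by (rule reindex_sum[OF ge that])
  have dE: "delta E v \<subseteq> E" "delta_in E v \<subseteq> E" for v by (auto simp: delta_def delta_in_def)
  define A where "A = (\<lambda>i j. if i < l then (if j = i then -1 else 0) else ind (delta E (gv (i - l))) j)"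
  define b :: "nat \<Rightarrow> real" where "b = (\<lambda>i. if i < l then 0 else 1)"
  define m where "m = l + n"
  define Q where "Q = {y \<in> Rsp l. \<forall>i<m. (\<Sum>j<l. A i j * y j) \<le> b i}"
  define Sm where "Sm = (\<lambda>i j. ind (delta_in E (gv i)) j)"
  define \<sigma> where "\<sigma> = (\<lambda>y i. if i < n then (\<Sum>j<l. Sm i j * y j) + (0::real) else 0)"
  define Pm where "Pm = (\<lambda>e j. ind {e} j)"
  define \<pi> where "\<pi> = (\<lambda>y e. if e \<in> E then (\<Sum>j<l. Pm e j * y j) + (0::real) else 0)"
  have piv: "\<pi> y = (\<lambda>e. if e \<in> E then y (ie e) else 0)" for y
  proof
    fix e show "\<pi> y e = (if e \<in> E then y (ie e) else 0)"
      unfolding \<pi>_def Pm_def using rs[of "{e}" y] by auto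
  qed
  have diag: "(\<Sum>j<l. A i j * y j) = - y i" if "i < l" for i y
  proof -
    have "(\<Sum>j<l. A i j * y j) = (\<Sum>j<l. if j = i then - y j else 0)"
      by (rule sum.cong) (auto simp: A_def that)
    also have "\<dots> = - y i" using that by (simp add: sum.delta)
    finally show ?thesis .
  qed
  have degc: "(\<Sum>j<l. A (l + r) j * y j) = (\<Sum>e\<in>delta E (gv r). y (ie e))" for r y
    unfolding A_def using rs[OF dE(1)] by simp
  have sumpi: "sum (\<pi> y) D = (\<Sum>e\<in>D. y (ie e))" if "D \<subseteq> E" for D y
    unfolding piv using that by (intro sum.cong) auto
  have img: "\<pi> ` {y \<in> Q. \<forall>i<n. \<sigma> y i \<in> \<int>} = matching_relaxation_int V E"
  proof
    show "\<pi> ` {y \<in> Q. \<forall>i<n. \<sigma> y i \<in> \<int>} \<subseteq> matching_relaxation_int V E"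
    proof
      fix x assume "x \<in> \<pi> ` {y \<in> Q. \<forall>i<n. \<sigma> y i \<in> \<int>}"
      then obtain y where yQ: "y \<in> Q" and yI: "\<forall>i<n. \<sigma> y i \<in> \<int>" and x: "x = \<pi> y" by blast
      have cons: "\<forall>i<m. (\<Sum>j<l. A i j * y j) \<le> b i" using yQ Q_def by simp
      show "x \<in> matching_relaxation_int V E"
        unfolding matching_relaxation_int_def
      proof (intro CollectI conjI allI impI ballI)
        fix e assume "e \<notin> E" thus "x e = 0" using x piv by simp
      next
        fix e assume eE: "e \<in> E"
        have "(\<Sum>j<l. A (ie e) j * y j) \<le> b (ie e)" using cons ie_lt[OF eE] m_def by simp
        hence "0 \<le> y (ie e)" using diag[OF ie_lt[OF eE]] ie_lt[OF eE] b_def by simp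
        thus "0 \<le> x e" using x piv eE by simp
      next
        fix v assume vV: "v \<in> V"
        then obtain r where r: "r < n" "v = gv r" using gv_img by auto
        have "(\<Sum>j<l. A (l + r) j * y j) \<le> b (l + r)" using cons r m_def by simp
        hence "(\<Sum>e\<in>delta E v. y (ie e)) \<le> 1" using degc r b_def by simp
        thus "sum x (delta E v) \<le> 1" using x sumpi[OF dE(1)] by simp
      next
        fix v assume vV: "v \<in> V"
        then obtain r where r: "r < n" "v = gv r" using gv_img by auto
        have eq: "\<sigma> y r = (\<Sum>e\<in>delta_in E v. y (ie e))"
          unfolding \<sigma>_def Sm_def using r rs[OF dE(2)] by simp
        have "\<sigma> y r \<in> \<int>" using yI r(1) by blast
        hence "(\<Sum>e\<in>delta_in E v. y (ie e)) \<in> \<int>" using eq by simp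
        thus "sum x (delta_in E v) \<in> \<int>" using x sumpi[OF dE(2)] by simp
      qed
    qed
  next
    show "matching_relaxation_int V E \<subseteq> \<pi> ` {y \<in> Q. \<forall>i<n. \<sigma> y i \<in> \<int>}"
    proof
      fix x assume xS: "x \<in> matching_relaxation_int V E"
      have x0: "\<And>e. e \<notin> E \<Longrightarrow> x e = 0" and xnn: "\<And>e. e \<in> E \<Longrightarrow> 0 \<le> x e"
        and xd: "\<And>v. v \<in> V \<Longrightarrow> sum x (delta E v) \<le> 1"
        and xi: "\<And>v. v \<in> V \<Longrightarrow> sum x (delta_in E v) \<in> \<int>"
        using xS unfolding matching_relaxation_int_def by auto
      define y where "y = (\<lambda>j. if j < l then x (ge j) else 0)"
      have yie: "y (ie e) = x e" if "e \<in> E" for e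
        using that ie_lt ge_ie y_def by simp
      have sy: "(\<Sum>e\<in>D. y (ie e)) = sum x D" if "D \<subseteq> E" for D
        using that yie by (intro sum.cong) auto
      have "\<pi> y = x"
      proof
        fix e show "\<pi> y e = x e" using piv yie x0 by (cases "e \<in> E") auto
      qed
      moreover have "y \<in> Q"
        unfolding Q_def
      proof (intro CollectI conjI allI impI)
        show "y \<in> Rsp l" by (simp add: Rsp_def y_def)
      next
        fix i assume i: "i < m"
        show "(\<Sum>j<l. A i j * y j) \<le> b i"
        proof (cases "i < l")
          case True
          thus ?thesis using diag[OF True] xnn[OF geE[OF True]] y_def b_def by simp
        next
          case False
          then obtain r where r: "i = l + r" "r < n" using i m_def by (metis add_diff_inverse_nat add_less_cancel_left)
          have "gv r \<in> V" using gv_img r by auto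
          thus ?thesis using degc[of r y] sy[OF dE(1)] xd r b_def by simp
        qed
      qed
      moreover have "\<forall>i<n. \<sigma> y i \<in> \<int>"
      proof (intro allI impI)
        fix r assume r: "r < n"
        have "gv r \<in> V" using gv_img r by auto
        moreover have "\<sigma> y r = sum x (delta_in E (gv r))"
          unfolding \<sigma>_def Sm_def using r rs[OF dE(2)] sy[OF dE(2)] by simp
        ultimately show "\<sigma> y r \<in> \<int>" using xi by simp
      qed
      ultimately show "x \<in> \<pi> ` {y \<in> Q. \<forall>i<n. \<sigma> y i \<in> \<int>}" by blast
    qed
  qed
  have milef: "is_MILEF E (matching_polytope E) l Q n \<sigma> \<pi>"
    unfolding is_MILEF_def
  proof (intro conjI)
    show "polyhedron_in l Q" unfolding polyhedron_in_def Q_def by blast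
    show "affine_to_Rk l n \<sigma>" unfolding affine_to_Rk_def \<sigma>_def
      by (rule exI[of _ Sm], rule exI[of _ "\<lambda>_. 0"]) simp
    show "affine_to_RE l E \<pi>" unfolding affine_to_RE_def \<pi>_def
      by (rule exI[of _ Pm], rule exI[of _ "\<lambda>_. 0"]) simp
    show "matching_polytope E = convex hull \<pi> ` {y \<in> Q. \<forall>i<n. \<sigma> y i \<in> \<int>}"
      using P1 img by simp
  qed
  have nf: "num_facets Q \<le> m" by (rule facets_le[OF Q_def])
  have "l \<le> card (V \<times> V)" unfolding l_def using EV finV by (intro card_mono) auto
  hence "l \<le> n * n" using n_def by (simp add: card_cartesian_product)
  moreover have "n \<le> n * n" by (cases n) auto
  ultimately have "m \<le> 2 * (n * n)" using m_def by linarith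
  hence "m \<le> 2 * n ^ 2" by (simp add: power2_eq_square)
  hence "num_facets Q \<le> 2 * n ^ 2" using nf by linarith
  thus ?thesis using milef n_def by blast
qed


theorem mainTheorem17:
  shows "(\<forall>(V :: 'a set) E. oriented_simple_graph V E \<longrightarrow>
            matching_polytope E = convex hull (matching_relaxation_int V E))
         \<and> (\<exists>c :: real. \<forall>(V :: nat set) E. oriented_simple_graph V E \<longrightarrow>
            (\<exists>l Q \<sigma> \<pi>. is_MILEF E (matching_polytope E) l Q (card V) \<sigma> \<pi> \<and>
                        real (num_facets Q) \<le> c * real (card V) ^ 2))"
proof (intro conjI)
  show "\<forall>(V :: 'a set) E. oriented_simple_graph V E \<longrightarrow>
            matching_polytope E = convex hull (matching_relaxation_int V E)"
    using part1 by blast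
next
  show "\<exists>c :: real. \<forall>(V :: nat set) E. oriented_simple_graph V E \<longrightarrow>
            (\<exists>l Q \<sigma> \<pi>. is_MILEF E (matching_polytope E) l Q (card V) \<sigma> \<pi> \<and>
                        real (num_facets Q) \<le> c * real (card V) ^ 2)"
  proof (rule exI[of _ 2], intro allI impI)
    fix V :: "nat set" and E assume G: "oriented_simple_graph V E"
    have finV: "finite V" and EV: "E \<subseteq> V \<times> V" using G unfolding oriented_simple_graph_def by auto
    obtain l Q \<sigma> \<pi> where M: "is_MILEF E (matching_polytope E) l Q (card V) \<sigma> \<pi>"
      and nf: "num_facets Q \<le> 2 * card V ^ 2"
      using milef_construction[OF finV EV part1[OF G]] by blast
    have "real (num_facets Q) \<le> real (2 * card V ^ 2)" using nf by (rule of_nat_mono)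
    hence "real (num_facets Q) \<le> 2 * real (card V) ^ 2" by simp
    thus "\<exists>l Q \<sigma> \<pi>. is_MILEF E (matching_polytope E) l Q (card V) \<sigma> \<pi> \<and>
                        real (num_facets Q) \<le> 2 * real (card V) ^ 2" using M by blast
  qed
qed

end
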